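(* Let $X=\left(\bigoplus_{i=1}^\infty\ell_\infty^i\right)_{\ell_1}$, the $\ell_1$-sum of the spaces $\ell_\infty^i$, $i\in\mathbb N$. Then $X$ is universally octahedral, but $X$ does not contain any subspace isomorphic to $c_0$ (in particular $X$ is not $c_0$-octahedral).
   Context: A Banach space $W$ is octahedral if for every finite dimensional subspace $E$ of $W$ and every $\varepsilon>0$ there exists $y\in W$, $\|y\|=1$, with $\|x+\lambda y\|\ge(1-\varepsilon)(\|x\|+|\lambda|)$ for all $x\in E$, $\lambda\in\mathbb R$. A real Banach space $X$ is universally octahedral if the space $L(Y,X)$ of bounded operators from $Y$ to $X$ with the operator norm is octahedral for every non-zero real Banach space $Y$. $X$ is $c_0$-octahedral if for every $x_1,\dots,x_n$ in the unit sphere of $X$ and every $\varepsilon>0$ there exists a subspace $Y\subseteq X$ isometric to $c_0$ such that $\|x_i+y\|>(1-\varepsilon)(1+\|y\|)$ for all $y\in Y$ and $1\le i\le n$. *)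

theory Defs
  imports "HOL-Analysis.Analysis"
begin

text \<open>An element is a double sequence x i j; block i (i = 0,1,2,...) is a vector in
  l_infinity^(i+1) with coordinates x i 0, ..., x i i (all other entries are 0).\<close>

definition blk :: "(nat \<Rightarrow> nat \<Rightarrow> real) \<Rightarrow> nat \<Rightarrow> real" where
  "blk x i = Max ((\<lambda>j. \<bar>x i j\<bar>) ` {..i})"

lemma blk_ge: "j \<le> i \<Longrightarrow> \<bar>x i j\<bar> \<le> blk x i"
  unfolding blk_def by (rule Max_ge) auto

lemma blk_nonneg: "0 \<le> blk x i"
  using blk_ge[of 0 i x] by auto

lemma blk_le: "(\<And>j. j \<le> i \<Longrightarrow> \<bar>x i j\<bar> \<le> c) \<Longrightarrow> blk x i \<le> c"
  unfolding blk_def by (subst Max_le_iff) auto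

lemma blk_add: "blk (\<lambda>i j. x i j + y i j) i \<le> blk x i + blk y i"
  by (rule blk_le) (smt (verit) blk_ge)

lemma blk_scale: "blk (\<lambda>i j. c * x i j) i = \<bar>c\<bar> * blk x i"
proof -
  have "mono ((*) \<bar>c\<bar>)" by (simp add: monoI mult_left_mono)
  then have "\<bar>c\<bar> * Max ((\<lambda>j. \<bar>x i j\<bar>) ` {..i}) = Max ((*) \<bar>c\<bar> ` ((\<lambda>j. \<bar>x i j\<bar>) ` {..i}))"
    by (rule mono_Max_commute) auto
  then show ?thesis unfolding blk_def by (simp add: image_image abs_mult)
qed

lemma blk_uminus: "blk (\<lambda>i j. - x i j) i = blk x i"
  unfolding blk_def by simp

lemma blk_zero: "blk (\<lambda>i j. 0) i = 0"
  unfolding blk_def by simp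

lemma blk_zero_fun: "blk (\<lambda>i j. 0) = (\<lambda>i. 0)"
  by (rule ext) (rule blk_zero)

lemma blk_uminus_fun: "blk (\<lambda>i j. - x i j) = blk x"
  by (rule ext) (rule blk_uminus)

lemma blk_scale_fun: "blk (\<lambda>i j. c * x i j) = (\<lambda>i. \<bar>c\<bar> * blk x i)"
  by (rule ext) (rule blk_scale)

typedef lsum = "{x :: nat \<Rightarrow> nat \<Rightarrow> real. (\<forall>i j. i < j \<longrightarrow> x i j = 0) \<and> summable (blk x)}"
  by (rule exI[of _ "\<lambda>i j. 0"]) (simp add: blk_zero_fun)

setup_lifting type_definition_lsum

lemma summable_blk_add:
  assumes "summable (blk x)" "summable (blk y)"
  shows "summable (blk (\<lambda>i j. x i j + y i j))"
  by (rule summable_comparison_test[OF _ summable_add[OF assms]])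
     (auto simp: blk_nonneg blk_add)

instantiation lsum :: real_normed_vector
begin

lift_definition zero_lsum :: lsum is "\<lambda>i j. 0" by (simp add: blk_zero_fun)

lift_definition plus_lsum :: "lsum \<Rightarrow> lsum \<Rightarrow> lsum" is "\<lambda>x y i j. x i j + y i j"
  by (simp add: summable_blk_add)

lift_definition uminus_lsum :: "lsum \<Rightarrow> lsum" is "\<lambda>x i j. - x i j"
  by (simp add: blk_uminus_fun)

lift_definition minus_lsum :: "lsum \<Rightarrow> lsum \<Rightarrow> lsum" is "\<lambda>x y i j. x i j - y i j"
proof -
  fix x y :: "nat \<Rightarrow> nat \<Rightarrow> real"
  assume "(\<forall>i j. i < j \<longrightarrow> x i j = 0) \<and> summable (blk x)"
     and "(\<forall>i j. i < j \<longrightarrow> y i j = 0) \<and> summable (blk y)"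
  then have "summable (blk (\<lambda>i j. x i j + - y i j))"
    by (intro summable_blk_add) (auto simp: blk_uminus_fun)
  then show "(\<forall>i j. i < j \<longrightarrow> x i j - y i j = 0) \<and> summable (blk (\<lambda>i j. x i j - y i j))"
    using \<open>(\<forall>i j. i < j \<longrightarrow> x i j = 0) \<and> _\<close> \<open>(\<forall>i j. i < j \<longrightarrow> y i j = 0) \<and> _\<close> by simp
qed

lift_definition scaleR_lsum :: "real \<Rightarrow> lsum \<Rightarrow> lsum" is "\<lambda>c x i j. c * x i j"
  by (simp add: blk_scale_fun summable_mult)

lift_definition norm_lsum :: "lsum \<Rightarrow> real" is "\<lambda>x. suminf (blk x)" .

definition dist_lsum :: "lsum \<Rightarrow> lsum \<Rightarrow> real" where "dist_lsum a b = norm (a - b)"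

definition sgn_lsum :: "lsum \<Rightarrow> lsum" where "sgn_lsum x = scaleR (inverse (norm x)) x"

definition uniformity_lsum :: "(lsum \<times> lsum) filter" where
  "uniformity_lsum = (INF e\<in>{0 <..}. principal {(x, y). dist x y < e})"

definition open_lsum :: "lsum set \<Rightarrow> bool" where
  "open_lsum S = (\<forall>x\<in>S. \<forall>\<^sub>F (x', y) in uniformity. x' = x \<longrightarrow> y \<in> S)"

lemma lsum_norm_eq_zero: "norm (x::lsum) = 0 \<longleftrightarrow> x = 0"
proof transfer
  fix x :: "nat \<Rightarrow> nat \<Rightarrow> real"
  assume x: "(\<forall>i j. i < j \<longrightarrow> x i j = 0) \<and> summable (blk x)"
  have "suminf (blk x) = 0 \<longleftrightarrow> (\<forall>i. blk x i = 0)"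
    using x by (intro suminf_eq_zero_iff) (auto simp: blk_nonneg)
  also have "\<dots> \<longleftrightarrow> x = (\<lambda>i j. 0)"
  proof
    assume h: "\<forall>i. blk x i = 0"
    show "x = (\<lambda>i j. 0)"
    proof (intro ext)
      fix i j
      show "x i j = 0"
      proof (cases "j \<le> i")
        case True then show ?thesis using blk_ge[OF True, of x] h by auto
      next
        case False then show ?thesis using x by auto
      qed
    qed
  qed (simp add: blk_zero_fun)
  finally show "suminf (blk x) = 0 \<longleftrightarrow> x = (\<lambda>i j. 0)" .
qed

lemma lsum_norm_triangle: "norm ((x::lsum) + y) \<le> norm x + norm y"
proof transfer
  fix x y :: "nat \<Rightarrow> nat \<Rightarrow> real"
  assume x: "(\<forall>i j. i < j \<longrightarrow> x i j = 0) \<and> summable (blk x)"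
     and y: "(\<forall>i j. i < j \<longrightarrow> y i j = 0) \<and> summable (blk y)"
  have "suminf (blk (\<lambda>i j. x i j + y i j)) \<le> suminf (\<lambda>i. blk x i + blk y i)"
    using x y by (intro suminf_le) (auto simp: blk_add summable_blk_add intro!: summable_add)
  also have "\<dots> = suminf (blk x) + suminf (blk y)"
    using x y by (intro suminf_add[symmetric]) auto
  finally show "suminf (blk (\<lambda>i j. x i j + y i j)) \<le> suminf (blk x) + suminf (blk y)" .
qed

lemma lsum_norm_scaleR: "norm (scaleR c (x::lsum)) = \<bar>c\<bar> * norm x"
  by transfer (simp add: blk_scale_fun suminf_mult)

instance
proof
  fix x y z :: lsum and a b :: real
  show "x + y + z = x + (y + z)" by transfer (simp add: algebra_simps)
  show "x + y = y + x" by transfer (simp add: algebra_simps)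
  show "0 + x = x" by transfer simp
  show "- x + x = 0" by transfer simp
  show "x - y = x + - y" by transfer simp
  show "a *\<^sub>R (x + y) = a *\<^sub>R x + a *\<^sub>R y" by transfer (simp add: algebra_simps)
  show "(a + b) *\<^sub>R x = a *\<^sub>R x + b *\<^sub>R x" by transfer (simp add: algebra_simps)
  show "a *\<^sub>R b *\<^sub>R x = (a * b) *\<^sub>R x" by transfer (simp add: mult.assoc)
  show "1 *\<^sub>R x = x" by transfer simp
  show "dist x y = norm (x - y)" by (simp add: dist_lsum_def)
  show "sgn x = inverse (norm x) *\<^sub>R x" by (simp add: sgn_lsum_def)
  show "(uniformity :: (lsum \<times> lsum) filter) = (INF e\<in>{0<..}. principal {(x, y). dist x y < e})"
    by (simp add: uniformity_lsum_def)
  show "norm x = 0 \<longleftrightarrow> x = 0" by (rule lsum_norm_eq_zero)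
  show "norm (x + y) \<le> norm x + norm y" by (rule lsum_norm_triangle)
  show "norm (a *\<^sub>R x) = \<bar>a\<bar> * norm x" by (rule lsum_norm_scaleR)
next
  fix U :: "lsum set"
  show "open U = (\<forall>x\<in>U. \<forall>\<^sub>F (x', y) in uniformity. x' = x \<longrightarrow> y \<in> U)"
    by (simp add: open_lsum_def)
qed

end

definition octahedral :: "'a::real_normed_vector set \<Rightarrow> bool" where
  "octahedral W \<longleftrightarrow>
    (\<forall>E \<epsilon>. subspace E \<and> E \<subseteq> W \<and> (\<exists>B. finite B \<and> E = span B) \<and> \<epsilon> > (0::real) \<longrightarrow>
      (\<exists>y\<in>W. norm y = 1 \<and>
         (\<forall>x\<in>E. \<forall>t::real. norm (x + t *\<^sub>R y) \<ge> (1 - \<epsilon>) * (norm x + \<bar>t\<bar>))))"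

definition c0 :: "(nat \<Rightarrow> real) set" where
  "c0 = {f. f \<longlonglongrightarrow> 0}"

definition c0_norm :: "(nat \<Rightarrow> real) \<Rightarrow> real" where
  "c0_norm f = (SUP n. \<bar>f n\<bar>)"

definition c0_linear :: "((nat \<Rightarrow> real) \<Rightarrow> 'a::real_vector) \<Rightarrow> bool" where
  "c0_linear T \<longleftrightarrow>
     (\<forall>f\<in>c0. \<forall>g\<in>c0. T (\<lambda>n. f n + g n) = T f + T g) \<and>
     (\<forall>f\<in>c0. \<forall>c. T (\<lambda>n. c * f n) = c *\<^sub>R T f)"

definition contains_c0 :: "'a::real_normed_vector itself \<Rightarrow> bool" where
  "contains_c0 _ \<longleftrightarrow>
     (\<exists>T :: (nat \<Rightarrow> real) \<Rightarrow> 'a. c0_linear T \<and>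
        (\<exists>a b. 0 < a \<and> 0 < b \<and>
           (\<forall>f\<in>c0. a * c0_norm f \<le> norm (T f) \<and> norm (T f) \<le> b * c0_norm f)))"

definition c0_octahedral :: "'a::real_normed_vector itself \<Rightarrow> bool" where
  "c0_octahedral _ \<longleftrightarrow>
     (\<forall>F::'a set. \<forall>\<epsilon>::real. finite F \<and> F \<noteq> {} \<and> (\<forall>x\<in>F. norm x = 1) \<and> \<epsilon> > 0 \<longrightarrow>
        (\<exists>T :: (nat \<Rightarrow> real) \<Rightarrow> 'a. c0_linear T \<and> (\<forall>f\<in>c0. norm (T f) = c0_norm f) \<and>
           (\<forall>x\<in>F. \<forall>y\<in>T ` c0. norm (x + y) > (1 - \<epsilon>) * (1 + norm y))))"

end

theory Submission
  imports Defs
begin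


definition goodf :: "'a::real_normed_vector set \<Rightarrow> ('a \<Rightarrow> real) \<Rightarrow> bool" where
  "goodf V g \<longleftrightarrow> subspace V \<and> (\<forall>x\<in>V. \<forall>y\<in>V. g (x + y) = g x + g y) \<and>
     (\<forall>x\<in>V. \<forall>c. g (c *\<^sub>R x) = c * g x) \<and> (\<forall>x\<in>V. g x \<le> norm x)"

definition grph :: "'a set \<Rightarrow> ('a \<Rightarrow> real) \<Rightarrow> ('a \<times> real) set" where
  "grph V g = (\<lambda>x. (x, g x)) ` V"

lemma ext_unique:
  fixes z :: "'a::real_normed_vector"
  assumes "subspace V" "z \<notin> V" "v \<in> V" "v' \<in> V" "v + a *\<^sub>R z = v' + a' *\<^sub>R z"
  shows "a = a'"
proof (rule ccontr)
  assume ne: "a \<noteq> a'"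
  have "(a - a') *\<^sub>R z = v' - v" using assms(5) by (simp add: algebra_simps)
  moreover have "z = (1 / (a - a')) *\<^sub>R ((a - a') *\<^sub>R z)" using ne by simp
  ultimately have "z = (1 / (a - a')) *\<^sub>R (v' - v)" by simp
  then have "z \<in> V" using assms by (simp add: subspace_diff subspace_scale)
  then show False using assms(2) by simp
qed

lemma ext_step:
  fixes z :: "'a::real_normed_vector"
  assumes gd: "goodf V g" and zV: "z \<notin> V"
    and r1: "\<And>v. v \<in> V \<Longrightarrow> g v - norm (v - z) \<le> r"
    and r2: "\<And>w. w \<in> V \<Longrightarrow> r \<le> norm (w + z) - g w"
  shows "\<exists>V' g'. goodf V' g' \<and> V \<subseteq> V' \<and> z \<in> V' \<and> (\<forall>v\<in>V. g' v = g v) \<and> g' z = r"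
proof -
  have sV: "subspace V" using gd goodf_def by blast
  define V' where "V' = {v + a *\<^sub>R z | v a. v \<in> V}"
  define co where "co w = (THE a. \<exists>v\<in>V. w = v + a *\<^sub>R z)" for w
  define g' where "g' w = g (w - co w *\<^sub>R z) + co w * r" for w
  have co: "co (v + a *\<^sub>R z) = a" if "v \<in> V" for v a
    unfolding co_def
  proof (rule the_equality)
    show "\<exists>v'\<in>V. v + a *\<^sub>R z = v' + a *\<^sub>R z" using that by blast
    fix a' assume "\<exists>v'\<in>V. v + a *\<^sub>R z = v' + a' *\<^sub>R z"
    then obtain v' where "v' \<in> V" "v + a *\<^sub>R z = v' + a' *\<^sub>R z" by blast
    then show "a' = a" using ext_unique[OF sV zV that] by metis
  qed
  have g'v: "g' (v + a *\<^sub>R z) = g v + a * r" if "v \<in> V" for v a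
    using co[OF that] by (simp add: g'_def)
  have add: "g (x + y) = g x + g y" if "x \<in> V" "y \<in> V" for x y
    using gd that unfolding goodf_def by blast
  have scl: "g (c *\<^sub>R x) = c * g x" if "x \<in> V" for x c
    using gd that unfolding goodf_def by blast
  have bnd: "g x \<le> norm x" if "x \<in> V" for x
    using gd that unfolding goodf_def by blast
  have "subspace V'"
    unfolding subspace_def V'_def
  proof (intro conjI ballI allI)
    show "0 \<in> {v + a *\<^sub>R z |v a. v \<in> V}"
      using sV by (auto intro!: exI[of _ 0] exI[of _ "0::real"] simp: subspace_0)
  next
    fix x y assume "x \<in> {v + a *\<^sub>R z |v a. v \<in> V}" "y \<in> {v + a *\<^sub>R z |v a. v \<in> V}"
    then obtain v a w b where "x = v + a *\<^sub>R z" "y = w + b *\<^sub>R z" "v \<in> V" "w \<in> V" by blast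
    then show "x + y \<in> {v + a *\<^sub>R z |v a. v \<in> V}"
      using sV by (auto intro!: exI[of _ "v + w"] exI[of _ "a + b"] simp: subspace_add algebra_simps)
  next
    fix c x assume "x \<in> {v + a *\<^sub>R z |v a. v \<in> V}"
    then obtain v a where "x = v + a *\<^sub>R z" "v \<in> V" by blast
    then show "c *\<^sub>R x \<in> {v + a *\<^sub>R z |v a. v \<in> V}"
      using sV by (auto intro!: exI[of _ "c *\<^sub>R v"] exI[of _ "c * a"] simp: subspace_scale algebra_simps)
  qed
  moreover have "\<forall>x\<in>V'. \<forall>y\<in>V'. g' (x + y) = g' x + g' y"
  proof (intro ballI)
    fix x y assume "x \<in> V'" "y \<in> V'"
    then obtain v a w b where xy: "x = v + a *\<^sub>R z" "y = w + b *\<^sub>R z" "v \<in> V" "w \<in> V"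
      unfolding V'_def by blast
    have "x + y = (v + w) + (a + b) *\<^sub>R z" using xy by (simp add: algebra_simps)
    then have "g' (x + y) = g (v + w) + (a + b) * r" using xy(3,4) g'v sV by (simp add: subspace_add)
    then show "g' (x + y) = g' x + g' y"
      using xy g'v add by (simp add: algebra_simps)
  qed
  moreover have "\<forall>x\<in>V'. \<forall>c. g' (c *\<^sub>R x) = c * g' x"
  proof (intro ballI allI)
    fix x c assume "x \<in> V'"
    then obtain v a where xy: "x = v + a *\<^sub>R z" "v \<in> V"
      unfolding V'_def by blast
    have "c *\<^sub>R x = (c *\<^sub>R v) + (c * a) *\<^sub>R z" using xy by (simp add: algebra_simps)
    then have "g' (c *\<^sub>R x) = g (c *\<^sub>R v) + (c * a) * r" using xy(2) g'v sV by (simp add: subspace_scale)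
    then show "g' (c *\<^sub>R x) = c * g' x"
      using xy g'v scl by (simp add: algebra_simps)
  qed
  moreover have "\<forall>x\<in>V'. g' x \<le> norm x"
  proof
    fix x assume "x \<in> V'"
    then obtain v a where xy: "x = v + a *\<^sub>R z" "v \<in> V"
      unfolding V'_def by blast
    have gx: "g' x = g v + a * r" using xy g'v by simp
    consider "a = 0" | "a > 0" | "a < 0" by linarith
    then show "g' x \<le> norm x"
    proof cases
      case 1 then show ?thesis using gx xy bnd by simp
    next
      case 2
      have vin: "(1/a) *\<^sub>R v \<in> V" using xy sV by (simp add: subspace_scale)
      have "r \<le> norm ((1/a) *\<^sub>R v + z) - g ((1/a) *\<^sub>R v)" by (rule r2[OF vin])
      then have "a * r \<le> a * (norm ((1/a) *\<^sub>R v + z) - (1/a) * g v)"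
        using 2 scl[OF xy(2)] by (simp add: mult_left_mono)
      moreover have "a * norm ((1/a) *\<^sub>R v + z) = norm (a *\<^sub>R ((1/a) *\<^sub>R v + z))"
        using 2 by simp
      moreover have "a *\<^sub>R ((1/a) *\<^sub>R v + z) = x" using 2 xy by (simp add: algebra_simps)
      ultimately show ?thesis using gx 2 by (simp add: algebra_simps)
    next
      case 3
      define b where "b = - a"
      have b: "b > 0" using 3 b_def by simp
      have vin: "(1/b) *\<^sub>R v \<in> V" using xy sV by (simp add: subspace_scale)
      have "g ((1/b) *\<^sub>R v) - norm ((1/b) *\<^sub>R v - z) \<le> r" by (rule r1[OF vin])
      then have "b * ((1/b) * g v - norm ((1/b) *\<^sub>R v - z)) \<le> b * r"
        using b scl[OF xy(2)] by (simp add: mult_left_mono)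
      moreover have "b * norm ((1/b) *\<^sub>R v - z) = norm (b *\<^sub>R ((1/b) *\<^sub>R v - z))"
        using b by simp
      moreover have "b *\<^sub>R ((1/b) *\<^sub>R v - z) = x" using b xy b_def by (simp add: algebra_simps)
      ultimately show ?thesis using gx b b_def by (simp add: algebra_simps)
    qed
  qed
  ultimately have "goodf V' g'" unfolding goodf_def by blast
  moreover have "V \<subseteq> V'" unfolding V'_def by (force intro: exI[of _ "0::real"])
  moreover have "z \<in> V'" unfolding V'_def using sV
    by (force intro: exI[of _ "0"] exI[of _ "1::real"] simp: subspace_0)
  moreover have "\<forall>v\<in>V. g' v = g v" using g'v[of _ 0] by simp
  moreover have "g' z = r"
  proof -
    have "g 0 = 0" using scl[of 0 0] sV by (simp add: subspace_0)
    then show ?thesis using g'v[of 0 1] sV by (simp add: subspace_0)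
  qed
  ultimately show ?thesis by blast
qed

lemma goodf_zero: "goodf {0::'a::real_normed_vector} (\<lambda>_. 0)"
  unfolding goodf_def by (auto simp: subspace_def)

lemma grph_good_sub:
  assumes "goodf W h" "grph W h \<subseteq> grph V g"
  shows "W \<subseteq> V \<and> (\<forall>w\<in>W. h w = g w)"
  using assms(2) unfolding grph_def by auto

lemma chain_union_good:
  fixes y0 :: "'a::real_normed_vector"
  assumes Cne: "C \<noteq> {}"
    and CA: "\<And>G. G \<in> C \<Longrightarrow> \<exists>V g. goodf V g \<and> G = grph V g \<and> (y0, norm y0) \<in> G"
    and ch: "\<And>G1 G2. G1 \<in> C \<Longrightarrow> G2 \<in> C \<Longrightarrow> G1 \<subseteq> G2 \<or> G2 \<subseteq> G1"
  shows "\<exists>V g. goodf V g \<and> \<Union>C = grph V g \<and> (y0, norm y0) \<in> \<Union>C"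
proof -
  define U where "U = \<Union>C"
  have two: "\<exists>G\<in>C. p \<in> G \<and> q \<in> G" if pq: "p \<in> U" "q \<in> U" for p q
  proof -
    obtain G1 G2 where "G1 \<in> C" "G2 \<in> C" "p \<in> G1" "q \<in> G2" using pq U_def by blast
    then show ?thesis using ch[of G1 G2] by blast
  qed
  have func: "r = r'" if xr: "(x, r) \<in> U" "(x, r') \<in> U" for x r r'
  proof -
    obtain G where "G \<in> C" "(x, r) \<in> G" "(x, r') \<in> G" using two[OF xr] by blast
    then obtain V g where "G = grph V g" using CA by blast
    then show ?thesis using \<open>(x, r) \<in> G\<close> \<open>(x, r') \<in> G\<close> unfolding grph_def by auto
  qed
  define V where "V = fst ` U"
  define g where "g x = (SOME r. (x, r) \<in> U)" for x
  have gU: "(x, g x) \<in> U" if "x \<in> V" for x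
    using that unfolding V_def g_def by (auto intro: someI)
  have Ueq: "U = grph V g"
  proof
    show "U \<subseteq> grph V g"
    proof
      fix p assume "p \<in> U"
      then obtain x r where p: "p = (x, r)" "(x, r) \<in> U" by (cases p) auto
      then have "x \<in> V" unfolding V_def by force
      then have "r = g x" using func[OF p(2) gU] by simp
      then show "p \<in> grph V g" using p \<open>x \<in> V\<close> unfolding grph_def by auto
    qed
    show "grph V g \<subseteq> U" using gU unfolding grph_def by auto
  qed
  have common: "\<exists>W h. goodf W h \<and> x1 \<in> W \<and> x2 \<in> W \<and> (\<forall>w\<in>W. g w = h w \<and> w \<in> V)"
    if xx: "x1 \<in> V" "x2 \<in> V" for x1 x2
  proof -
    obtain G where G: "G \<in> C" "(x1, g x1) \<in> G" "(x2, g x2) \<in> G" using two[OF gU[OF xx(1)] gU[OF xx(2)]] by blast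
    then obtain W h where Wh: "goodf W h" "G = grph W h" using CA by blast
    have sub: "grph W h \<subseteq> grph V g" using G(1) Wh(2) Ueq U_def by blast
    have "x1 \<in> W" "x2 \<in> W" using G Wh unfolding grph_def by auto
    then show ?thesis using grph_good_sub[OF Wh(1) sub] Wh(1) by (intro exI[of _ W] exI[of _ h]) auto
  qed
  have "goodf V g"
    unfolding goodf_def
  proof (intro conjI ballI allI)
    show "subspace V"
      unfolding subspace_def
    proof (intro conjI ballI allI)
      obtain G where "G \<in> C" using Cne by blast
      then obtain W h where Wh: "goodf W h" "G = grph W h" using CA by blast
      have "0 \<in> W" using Wh(1) unfolding goodf_def by (simp add: subspace_0)
      then have "(0, h 0) \<in> G" using Wh(2) unfolding grph_def by auto
      then have "(0, h 0) \<in> U" using \<open>G \<in> C\<close> U_def by blast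
      then show "0 \<in> V" unfolding V_def by force
    next
      fix x y assume "x \<in> V" "y \<in> V"
      then obtain W h where "goodf W h" "x \<in> W" "y \<in> W" "\<forall>w\<in>W. g w = h w \<and> w \<in> V"
        using common by blast
      then show "x + y \<in> V" unfolding goodf_def by (meson subspace_add)
    next
      fix c x assume "x \<in> V"
      then obtain W h where "goodf W h" "x \<in> W" "\<forall>w\<in>W. g w = h w \<and> w \<in> V"
        using common by blast
      then show "c *\<^sub>R x \<in> V" unfolding goodf_def by (meson subspace_scale)
    qed
  next
    fix x y assume "x \<in> V" "y \<in> V"
    then obtain W h where W: "goodf W h" "x \<in> W" "y \<in> W" "\<forall>w\<in>W. g w = h w \<and> w \<in> V"
      using common by blast
    then have "x + y \<in> W" unfolding goodf_def by (meson subspace_add)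
    then show "g (x + y) = g x + g y" using W unfolding goodf_def by metis
  next
    fix c x assume "x \<in> V"
    then obtain W h where W: "goodf W h" "x \<in> W" "\<forall>w\<in>W. g w = h w \<and> w \<in> V"
      using common by blast
    then have "c *\<^sub>R x \<in> W" unfolding goodf_def by (meson subspace_scale)
    then show "g (c *\<^sub>R x) = c * g x" using W unfolding goodf_def by metis
  next
    fix x assume "x \<in> V"
    then obtain W h where W: "goodf W h" "x \<in> W" "\<forall>w\<in>W. g w = h w \<and> w \<in> V"
      using common by blast
    then show "g x \<le> norm x" unfolding goodf_def by metis
  qed
  moreover have "(y0, norm y0) \<in> U" using Cne CA U_def by blast
  ultimately show ?thesis using Ueq U_def by blast
qed

lemma hahn_banach_norm:
  fixes y0 :: "'a::real_normed_vector"
  assumes y0: "y0 \<noteq> 0"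
  shows "\<exists>f. (\<forall>x y. f (x + y) = f x + f y) \<and> (\<forall>c x. f (c *\<^sub>R x) = c * f x) \<and>
             (\<forall>x. \<bar>f x\<bar> \<le> norm x) \<and> f y0 = norm y0"
proof -
  define A where "A = {G. \<exists>V g. goodf V g \<and> G = grph V g \<and> (y0, norm y0) \<in> G}"
  have "A \<noteq> {}"
  proof -
    have "\<exists>V' g'. goodf V' g' \<and> {0} \<subseteq> V' \<and> y0 \<in> V' \<and> (\<forall>v\<in>{0}. g' v = 0) \<and> g' y0 = norm y0"
      by (rule ext_step[OF goodf_zero, of y0 "norm y0"]) (use y0 in auto)
    then obtain V g where "goodf V g" "y0 \<in> V" "g y0 = norm y0" by blast
    then have "grph V g \<in> A" unfolding A_def grph_def by force
    then show ?thesis by blast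
  qed
  moreover have "\<Union>C \<in> A" if "C \<noteq> {}" "subset.chain A C" for C
  proof -
    have "\<exists>V g. goodf V g \<and> \<Union>C = grph V g \<and> (y0, norm y0) \<in> \<Union>C"
      by (rule chain_union_good[OF that(1)])
        (use that(2) in \<open>auto simp: subset_chain_def A_def\<close>)
    then show ?thesis unfolding A_def by blast
  qed
  ultimately obtain M where M: "M \<in> A" "\<forall>X\<in>A. M \<subseteq> X \<longrightarrow> X = M"
    using subset_Zorn_nonempty[of A] by blast
  then obtain V g where Vg: "goodf V g" "M = grph V g" "(y0, norm y0) \<in> M"
    unfolding A_def by blast
  have sV: "subspace V" using Vg goodf_def by blast
  have add: "g (x + y) = g x + g y" if "x \<in> V" "y \<in> V" for x y
    using Vg that unfolding goodf_def by blast
  have scl: "g (c *\<^sub>R x) = c * g x" if "x \<in> V" for x c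
    using Vg that unfolding goodf_def by blast
  have bnd: "g x \<le> norm x" if "x \<in> V" for x
    using Vg that unfolding goodf_def by blast
  have y0V: "y0 \<in> V" and gy0: "g y0 = norm y0" using Vg unfolding grph_def by auto
  have VU: "V = UNIV"
  proof (rule ccontr)
    assume "V \<noteq> UNIV"
    then obtain z where zV: "z \<notin> V" by blast
    have key: "g v - norm (v - z) \<le> norm (w + z) - g w" if "v \<in> V" "w \<in> V" for v w
    proof -
      have "g v + g w = g (v + w)" using add that by simp
      also have "\<dots> \<le> norm (v + w)" using bnd sV that by (simp add: subspace_add)
      also have "\<dots> \<le> norm (v - z) + norm (w + z)"
        using norm_triangle_ineq[of "v - z" "w + z"] by simp
      finally show ?thesis by simp
    qed
    define r where "r = (SUP v\<in>V. g v - norm (v - z))"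
    have V0: "0 \<in> V" using sV by (simp add: subspace_0)
    have bdd: "bdd_above ((\<lambda>v. g v - norm (v - z)) ` V)"
      using key[OF _ V0] by (auto intro!: bdd_aboveI2)
    have r1: "g v - norm (v - z) \<le> r" if "v \<in> V" for v
      unfolding r_def using bdd that by (rule cSUP_upper2) simp
    have r2: "r \<le> norm (w + z) - g w" if "w \<in> V" for w
      unfolding r_def using V0 key that by (intro cSUP_least) auto
    obtain V' g' where V': "goodf V' g'" "V \<subseteq> V'" "z \<in> V'" "\<forall>v\<in>V. g' v = g v"
      using ext_step[OF Vg(1) zV r1 r2] by blast
    have "grph V' g' \<in> A" using V' y0V gy0 unfolding A_def grph_def by force
    moreover have "M \<subseteq> grph V' g'" using V' Vg(2) unfolding grph_def by force
    ultimately have "grph V' g' = M" using M by blast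
    then have "(z, g' z) \<in> grph V g" using V'(3) Vg(2) unfolding grph_def by auto
    then show False using zV unfolding grph_def by auto
  qed
  have "\<bar>g x\<bar> \<le> norm x" for x
  proof -
    have "g x \<le> norm x" using bnd VU by simp
    moreover have "g (- x) \<le> norm x" using bnd[of "-x"] VU by simp
    moreover have "g (- x) = - g x" using scl[of x "-1"] VU by simp
    ultimately show ?thesis by simp
  qed
  then show ?thesis using add scl VU gy0 by (intro exI[of _ g]) auto
qed



lemma Rep_lsum_props: "(\<forall>i j. i < j \<longrightarrow> Rep_lsum x i j = 0) \<and> summable (blk (Rep_lsum x))"
  using Rep_lsum[of x] by simp

lemma summable_blk_lsum: "summable (blk (Rep_lsum x))"
  using Rep_lsum_props by blast

lemma norm_lsum_eq: "norm x = suminf (blk (Rep_lsum x))"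
  by (simp add: norm_lsum.rep_eq)

lemma blk_le_norm: "blk (Rep_lsum x) i \<le> norm x"
proof -
  have "sum (blk (Rep_lsum x)) {i} \<le> suminf (blk (Rep_lsum x))"
    by (rule sum_le_suminf) (auto simp: summable_blk_lsum blk_nonneg)
  then show ?thesis by (simp add: norm_lsum_eq)
qed

lemma coord_le_norm: "\<bar>Rep_lsum x i j\<bar> \<le> norm x"
proof (cases "j \<le> i")
  case True then show ?thesis using blk_ge[OF True, of "Rep_lsum x"] blk_le_norm[of x i] by linarith
next
  case False then show ?thesis using Rep_lsum_props[of x] by simp
qed

lemma Rep_lsum_sum: "Rep_lsum (sum f A) i j = (\<Sum>a\<in>A. Rep_lsum (f a) i j)"
  by (induction A rule: infinite_finite_induct) (auto simp: zero_lsum.rep_eq plus_lsum.rep_eq)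

lemma blk_attained: "\<exists>j\<le>i. blk u i = \<bar>u i j\<bar>"
proof -
  have "blk u i \<in> (\<lambda>j. \<bar>u i j\<bar>) ` {..i}" unfolding blk_def by (rule Max_in) auto
  then show ?thesis by auto
qed

lemma blk_pm: "blk (\<lambda>i j. u i j + v i j) i + blk (\<lambda>i j. u i j - v i j) i \<ge> 2 * max (blk u i) (blk v i)"
proof -
  have *: "blk (\<lambda>i j. u i j + v i j) i + blk (\<lambda>i j. u i j - v i j) i \<ge> \<bar>u i j + v i j\<bar> + \<bar>u i j - v i j\<bar>"
    if "j \<le> i" for j
    using blk_ge[OF that, of "\<lambda>i j. u i j + v i j"] blk_ge[OF that, of "\<lambda>i j. u i j - v i j"] by simp
  obtain j where j: "j \<le> i" "blk u i = \<bar>u i j\<bar>" using blk_attained by blast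
  obtain k where k: "k \<le> i" "blk v i = \<bar>v i k\<bar>" using blk_attained by blast
  have "2 * blk u i \<le> blk (\<lambda>i j. u i j + v i j) i + blk (\<lambda>i j. u i j - v i j) i"
    using *[OF j(1)] j(2) by linarith
  moreover have "2 * blk v i \<le> blk (\<lambda>i j. u i j + v i j) i + blk (\<lambda>i j. u i j - v i j) i"
    using *[OF k(1)] k(2) by linarith
  ultimately show ?thesis by linarith
qed

definition ev :: "nat \<Rightarrow> nat \<Rightarrow> real" where "ev n = (\<lambda>k. if k = n then 1 else 0)"

lemma fin_supp_c0: "(\<And>k. k \<ge> K \<Longrightarrow> f k = 0) \<Longrightarrow> f \<in> c0"
  unfolding c0_def by (auto intro!: tendsto_eventually exI[of _ K] simp: eventually_sequentially)

lemma ev_c0: "ev n \<in> c0"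
  by (rule fin_supp_c0[of "Suc n"]) (auto simp: ev_def)

lemma c0_norm_le1: "(\<And>k. \<bar>f k\<bar> \<le> 1) \<Longrightarrow> c0_norm f \<le> 1"
  unfolding c0_norm_def by (rule cSUP_least) auto

lemma c0_norm_ev: "c0_norm (ev n) \<ge> 1"
proof -
  have "bdd_above (range (\<lambda>k. \<bar>ev n k\<bar>))" by (rule bdd_aboveI[of _ 1]) (auto simp: ev_def)
  then show ?thesis unfolding c0_norm_def by (rule cSUP_upper2[of _ _ n]) (auto simp: ev_def)
qed

lemma c0_linear_fin:
  assumes "c0_linear T"
  shows "T (\<lambda>k. if k < N then c k else 0) = (\<Sum>n<N. c n *\<^sub>R T (ev n))"
proof (induction N)
  case 0
  have "T (\<lambda>k. 0 * ev 0 k) = 0 *\<^sub>R T (ev 0)" using assms ev_c0 unfolding c0_linear_def by blast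
  then show ?case by simp
next
  case (Suc N)
  have add_lin: "\<And>f g. f \<in> c0 \<Longrightarrow> g \<in> c0 \<Longrightarrow> T (\<lambda>n. f n + g n) = T f + T g"
    using assms unfolding c0_linear_def by blast
  have eq: "(\<lambda>k. if k < Suc N then c k else 0) = (\<lambda>k. (if k < N then c k else 0) + c N * ev N k)"
    by (rule ext) (simp add: ev_def less_Suc_eq)
  have c1: "(\<lambda>k. if k < N then c k else 0) \<in> c0" by (rule fin_supp_c0[of N]) auto
  have c2: "(\<lambda>k. c N * ev N k) \<in> c0" by (rule fin_supp_c0[of "Suc N"]) (auto simp: ev_def)
  have "T (\<lambda>k. if k < Suc N then c k else 0) = T (\<lambda>k. if k < N then c k else 0) + T (\<lambda>k. c N * ev N k)"
    using add_lin[OF c1 c2] unfolding eq by simp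
  also have "T (\<lambda>k. c N * ev N k) = c N *\<^sub>R T (ev N)" using assms ev_c0 unfolding c0_linear_def by blast
  finally show ?case using Suc by simp
qed

theorem no_c0: "\<not> contains_c0 TYPE(lsum)"
proof
  assume "contains_c0 TYPE(lsum)"
  then obtain T :: "(nat \<Rightarrow> real) \<Rightarrow> lsum" and a b where
    lin: "c0_linear T" and ab: "0 < a" "0 < b"
    and bd: "\<And>f. f \<in> c0 \<Longrightarrow> a * c0_norm f \<le> norm (T f) \<and> norm (T f) \<le> b * c0_norm f"
    unfolding contains_c0_def by blast
  define x where "x n = Rep_lsum (T (ev n))" for n
  have Tadd: "T (\<lambda>n. f n + g n) = T f + T g" if "f \<in> c0" "g \<in> c0" for f g
    using lin that unfolding c0_linear_def by blast
  have Tscl: "T (\<lambda>n. c * f n) = c *\<^sub>R T f" if "f \<in> c0" for f c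
    using lin that unfolding c0_linear_def by blast
  have Tb: "norm (T f) \<le> b" if "f \<in> c0" "\<And>k. \<bar>f k\<bar> \<le> 1" for f
  proof -
    have "norm (T f) \<le> b * c0_norm f" using bd that by blast
    also have "\<dots> \<le> b * 1" using c0_norm_le1[OF that(2)] ab by (intro mult_left_mono) auto
    finally show ?thesis by simp
  qed
  have xa: "norm (T (ev n)) \<ge> a" for n
  proof -
    have "a * 1 \<le> a * c0_norm (ev n)" using c0_norm_ev ab by (intro mult_left_mono) auto
    then show ?thesis using bd[OF ev_c0, of n] by simp
  qed
  have coord0: "(\<lambda>n. x n i j) \<longlonglongrightarrow> 0" for i j
  proof -
    have S: "sum (\<lambda>n. \<bar>x n i j\<bar>) {..<N} \<le> b" for N
    proof -
      define c where "c n = sgn (x n i j)" for n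
      define f where "f = (\<lambda>k. if k < N then c k else 0)"
      have fc0: "f \<in> c0" unfolding f_def by (rule fin_supp_c0[of N]) auto
      have f1: "\<bar>f k\<bar> \<le> 1" for k unfolding f_def c_def by (auto simp: abs_sgn_eq)
      have "T f = (\<Sum>n<N. c n *\<^sub>R T (ev n))" unfolding f_def by (rule c0_linear_fin[OF lin])
      then have "Rep_lsum (T f) i j = (\<Sum>n<N. c n * x n i j)"
        by (simp add: Rep_lsum_sum scaleR_lsum.rep_eq x_def)
      also have "\<dots> = sum (\<lambda>n. \<bar>x n i j\<bar>) {..<N}"
        unfolding c_def by (intro sum.cong) (auto simp: sgn_if)
      finally have "sum (\<lambda>n. \<bar>x n i j\<bar>) {..<N} \<le> norm (T f)"
        using coord_le_norm[of "T f" i j] by simp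
      then show ?thesis using Tb[OF fc0 f1] by simp
    qed
    have "summable (\<lambda>n. \<bar>x n i j\<bar>)"
    proof (rule bounded_imp_summable[of _ b])
      fix n show "(\<Sum>k\<le>n. \<bar>x k i j\<bar>) \<le> b" using S[of "Suc n"] by (simp only: lessThan_Suc_atMost)
    qed simp
    then have "(\<lambda>n. \<bar>x n i j\<bar>) \<longlonglongrightarrow> 0" by (rule summable_LIMSEQ_zero)
    then show ?thesis by (simp add: tendsto_rabs_zero_iff)
  qed
  have blk0: "(\<lambda>n. blk (x n) i) \<longlonglongrightarrow> 0" for i
  proof -
    have "(\<lambda>n. \<Sum>j\<le>i. \<bar>x n i j\<bar>) \<longlonglongrightarrow> 0"
      using coord0 by (intro tendsto_null_sum) (simp add: tendsto_rabs_zero_iff)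
    moreover have "norm (blk (x n) i) \<le> (\<Sum>j\<le>i. \<bar>x n i j\<bar>)" for n
    proof -
      have "blk (x n) i \<le> (\<Sum>j\<le>i. \<bar>x n i j\<bar>)"
        by (rule blk_le) (rule member_le_sum[where f="\<lambda>j. \<bar>x n i j\<bar>"], auto)
      then show ?thesis using blk_nonneg[of "x n" i] by simp
    qed
    then have "\<forall>\<^sub>F n in sequentially. norm (blk (x n) i) \<le> (\<Sum>j\<le>i. \<bar>x n i j\<bar>)"
      by simp
    from Lim_null_comparison[OF this] show ?thesis using calculation by blast
  qed
  have head0: "(\<lambda>n. \<Sum>i<M. blk (x n) i) \<longlonglongrightarrow> 0" for M
    using blk0 by (intro tendsto_null_sum) auto
  have grow: "\<exists>g K. (\<forall>k\<ge>K. g k = 0) \<and> (\<forall>k. \<bar>g k\<bar> \<le> 1) \<and> norm (T g) \<ge> real N * (a / 2)" for N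
  proof (induction N)
    case 0
    then show ?case by (intro exI[of _ "\<lambda>k. 0"] exI[of _ 0]) auto
  next
    case (Suc N)
    then obtain g K where gK: "\<forall>k\<ge>K. g k = 0" "\<forall>k. \<bar>g k\<bar> \<le> 1" "norm (T g) \<ge> real N * (a / 2)"
      by blast
    have gc0: "g \<in> c0" using gK by (intro fin_supp_c0[of K]) auto
    define u where "u = Rep_lsum (T g)"
    have su: "summable (blk u)" unfolding u_def by (rule summable_blk_lsum)
    obtain M where M: "norm (\<Sum>i. blk u (i + M)) < a / 4"
      using suminf_exist_split[OF _ su, of "a/4"] ab by auto
    have "\<forall>\<^sub>F n in sequentially. (\<Sum>i<M. blk (x n) i) < a / 4"
      using order_tendstoD(2)[OF head0[of M], of "a/4"] ab by simp
    moreover have "\<forall>\<^sub>F n in sequentially. n \<ge> K" by (simp add: eventually_ge_at_top)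
    ultimately have "\<forall>\<^sub>F n in sequentially. (\<Sum>i<M. blk (x n) i) < a / 4 \<and> n \<ge> K"
      by (rule eventually_conj)
    then obtain n where n: "(\<Sum>i<M. blk (x n) i) < a / 4" "n \<ge> K"
      by (auto simp: eventually_sequentially)
    define v where "v = x n"
    have sv: "summable (blk v)" unfolding v_def x_def by (rule summable_blk_lsum)
    define h where "h i = (if i < M then blk u i else blk v i)" for i
    have hle: "h i \<le> blk u i + blk v i" for i unfolding h_def using blk_nonneg[of u i] blk_nonneg[of v i] by auto
    have hnn: "0 \<le> h i" for i unfolding h_def using blk_nonneg[of u i] blk_nonneg[of v i] by auto
    have sh: "summable h"
      by (rule summable_comparison_test[OF _ summable_add[OF su sv]]) (use hle hnn in auto)
    have splith: "suminf h = (\<Sum>i. h (i + M)) + sum h {..<M}"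
      by (rule suminf_split_initial_segment[OF sh])
    have splitu: "suminf (blk u) = (\<Sum>i. blk u (i + M)) + sum (blk u) {..<M}"
      by (rule suminf_split_initial_segment[OF su])
    have splitv: "suminf (blk v) = (\<Sum>i. blk v (i + M)) + sum (blk v) {..<M}"
      by (rule suminf_split_initial_segment[OF sv])
    have "sum h {..<M} = sum (blk u) {..<M}" unfolding h_def by simp
    moreover have "(\<Sum>i. h (i + M)) = (\<Sum>i. blk v (i + M))" unfolding h_def by simp
    ultimately have hval: "suminf h = suminf (blk u) - (\<Sum>i. blk u (i + M)) + suminf (blk v) - sum (blk v) {..<M}"
      using splith splitu splitv by simp
    have nu: "norm (T g) = suminf (blk u)" unfolding u_def by (rule norm_lsum_eq)
    have nv: "norm (T (ev n)) = suminf (blk v)" unfolding v_def x_def by (rule norm_lsum_eq)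
    have "suminf h > norm (T g) - a/4 + a - a/4"
      using hval nu nv M xa[of n] n(1) unfolding v_def by auto
    define p where "p = T g + T (ev n)"
    define q where "q = T g - T (ev n)"
    have rp: "Rep_lsum p = (\<lambda>i j. u i j + v i j)" unfolding p_def u_def v_def x_def
      by (simp add: plus_lsum.rep_eq)
    have rq: "Rep_lsum q = (\<lambda>i j. u i j - v i j)" unfolding q_def u_def v_def x_def
      by (simp add: minus_lsum.rep_eq)
    have "norm p + norm q = suminf (\<lambda>i. blk (Rep_lsum p) i + blk (Rep_lsum q) i)"
      unfolding norm_lsum_eq by (rule suminf_add[OF summable_blk_lsum summable_blk_lsum])
    also have "\<dots> \<ge> suminf (\<lambda>i. 2 * h i)"
    proof (rule suminf_le)
      show "summable (\<lambda>i. 2 * h i)" using sh by (rule summable_mult)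
      show "summable (\<lambda>i. blk (Rep_lsum p) i + blk (Rep_lsum q) i)"
        by (rule summable_add) (rule summable_blk_lsum)+
      fix i show "2 * h i \<le> blk (Rep_lsum p) i + blk (Rep_lsum q) i"
        unfolding rp rq using blk_pm[where u=u and v=v and i=i] unfolding h_def by auto
    qed
    finally have "norm p + norm q \<ge> 2 * suminf h" using suminf_mult[OF sh, of 2] by simp
    moreover have "2 * suminf h > 2 * norm (T g) + a"
      using \<open>suminf h > _\<close> by (simp add: field_simps)
    ultimately have big: "norm p + norm q \<ge> 2 * norm (T g) + a"
      by linarith
    define s :: real where "s = (if norm q \<le> norm p then 1 else -1)"
    define g' where "g' = (\<lambda>k. g k + s * ev n k)"
    have evc: "(\<lambda>k. s * ev n k) \<in> c0" using ev_c0 Tscl by (intro fin_supp_c0[of "Suc n"]) (auto simp: ev_def)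
    have "T g' = T g + T (\<lambda>k. s * ev n k)" unfolding g'_def by (rule Tadd[OF gc0 evc])
    also have "T (\<lambda>k. s * ev n k) = s *\<^sub>R T (ev n)" by (rule Tscl[OF ev_c0])
    finally have Tg': "T g' = (if norm q \<le> norm p then p else q)"
      unfolding s_def p_def q_def by simp
    have "norm (T g') \<ge> norm (T g) + a / 2" using big Tg' by (auto simp: field_simps)
    then have "norm (T g') \<ge> real (Suc N) * (a / 2)" using gK(3) by (simp add: algebra_simps)
    moreover have "\<forall>k\<ge>max K (Suc n). g' k = 0" using gK(1) unfolding g'_def ev_def by auto
    moreover have "\<forall>k. \<bar>g' k\<bar> \<le> 1"
      unfolding g'_def ev_def s_def using gK(1,2) n(2) by auto
    ultimately show ?case by blast
  qed
  obtain N :: nat where N: "real N > 2 * b / a" using reals_Archimedean2 by blast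
  obtain g K where gK: "\<forall>k\<ge>K. g k = 0" "\<forall>k. \<bar>g k\<bar> \<le> 1" "norm (T g) \<ge> real N * (a / 2)"
    using grow by blast
  have "norm (T g) \<le> b" using gK by (intro Tb fin_supp_c0[of K]) auto
  moreover have "real N * (a / 2) > b" using N ab by (simp add: field_simps)
  ultimately show False using gK(3) by linarith
qed

theorem no_c0_oct: "\<not> c0_octahedral TYPE(lsum)"
proof
  assume oc: "c0_octahedral TYPE(lsum)"
  define e where "e = Abs_lsum (\<lambda>i j. if i = 0 \<and> j = 0 then 1 else 0)"
  have blke: "blk (\<lambda>i j. if i = 0 \<and> j = 0 then 1 else (0::real)) = (\<lambda>i. if i = 0 then 1 else 0)"
  proof
    fix i show "blk (\<lambda>i j. if i = 0 \<and> j = 0 then 1 else (0::real)) i = (if i = 0 then 1 else 0)"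
      by (cases "i = 0") (auto simp: blk_def)
  qed
  have sm: "summable (\<lambda>i. if i = 0 then 1 else (0::real))"
    by (rule summable_finite[of "{0}"]) auto
  have re: "Rep_lsum e = (\<lambda>i j. if i = 0 \<and> j = 0 then 1 else 0)"
    unfolding e_def by (rule Abs_lsum_inverse) (auto simp: blke sm)
  have "norm e = 1" unfolding norm_lsum_eq re blke
    by (subst suminf_finite[of "{0}"]) auto
  then obtain T :: "(nat \<Rightarrow> real) \<Rightarrow> lsum" where T: "c0_linear T" "\<forall>f\<in>c0. norm (T f) = c0_norm f"
    using oc[unfolded c0_octahedral_def, rule_format, of "{e}" 1] by auto
  then have "contains_c0 TYPE(lsum)" unfolding contains_c0_def
    by (intro exI[of _ T]) (auto intro!: exI[of _ 1])
  then show False using no_c0 by blast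
qed



definition Kset :: "'a set \<Rightarrow> ('a \<Rightarrow> real) set" where
  "Kset C = {c. c \<in> PiE UNIV (\<lambda>v. if v \<in> C then {-1..1} else {0}) \<and> (\<Sum>v\<in>C. \<bar>c v\<bar>) = 1}"

lemma compact_Kset:
  assumes "finite C"
  shows "compact (Kset C)"
proof -
  have "compactin (product_topology (\<lambda>_. euclidean) UNIV) (PiE UNIV (\<lambda>v. if v \<in> C then {-1..1::real} else {0}))"
  proof (subst compactin_PiE, rule disjI2, intro ballI)
    fix i :: 'a show "compactin euclidean (if i \<in> C then {-1..1::real} else {0})" by simp
  qed
  then have c1: "compact (PiE UNIV (\<lambda>v. if v \<in> C then {-1..1::real} else {0}))"
    by (simp add: euclidean_product_topology)
  have c2: "closed {c :: 'a \<Rightarrow> real. (\<Sum>v\<in>C. \<bar>c v\<bar>) = 1}"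
  proof (rule closed_Collect_eq)
    show "continuous_on UNIV (\<lambda>c::'a \<Rightarrow> real. \<Sum>v\<in>C. \<bar>c v\<bar>)"
      by (intro continuous_on_sum continuous_on_rabs continuous_on_product_coordinates)
  qed simp
  have "Kset C = PiE UNIV (\<lambda>v. if v \<in> C then {-1..1::real} else {0}) \<inter> {c. (\<Sum>v\<in>C. \<bar>c v\<bar>) = 1}"
    unfolding Kset_def by auto
  then show ?thesis using compact_Int_closed[OF c1 c2] by simp
qed

lemma Kset_memI:
  assumes "\<And>v. v \<in> C \<Longrightarrow> \<bar>c v\<bar> \<le> 1" "\<And>v. v \<notin> C \<Longrightarrow> c v = 0" "(\<Sum>v\<in>C. \<bar>c v\<bar>) = 1"
  shows "c \<in> Kset C"
proof -
  have "c v \<in> (if v \<in> C then {-1..1} else {0})" for v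
    using assms(1)[of v] assms(2)[of v] by (cases "v \<in> C") (simp_all add: abs_le_iff)
  then have "c \<in> Pi UNIV (\<lambda>v. if v \<in> C then {-1..1} else {0})" by (simp only: Pi_iff) blast
  then show ?thesis unfolding Kset_def PiE_UNIV_domain using assms(3) by blast
qed

lemma Kset_memD:
  assumes "c \<in> Kset C"
  shows "(\<Sum>v\<in>C. \<bar>c v\<bar>) = 1"
  using assms unfolding Kset_def by blast

lemma Kset_normalize:
  fixes c :: "'a \<Rightarrow> real"
  assumes "finite C" "(\<Sum>v\<in>C. \<bar>c v\<bar>) = s" "s > 0"
  shows "(\<lambda>v. if v \<in> C then c v / s else 0) \<in> Kset C"
proof (rule Kset_memI)
  fix v assume v: "v \<in> C"
  have "\<bar>c v\<bar> \<le> (\<Sum>v\<in>C. \<bar>c v\<bar>)"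
    by (rule member_le_sum[OF v _ assms(1)]) simp
  then have "\<bar>c v\<bar> \<le> s" using assms(2) by simp
  then have "\<bar>c v\<bar> / s \<le> 1" using assms(3) by (simp add: pos_divide_le_eq)
  then show "\<bar>(if v \<in> C then c v / s else 0)\<bar> \<le> 1" using v assms(3) by (simp add: abs_of_pos)
next
  fix v assume "v \<notin> C" then show "(if v \<in> C then c v / s else 0) = 0" by simp
next
  have "(\<Sum>v\<in>C. \<bar>(if v \<in> C then c v / s else 0)\<bar>) = (\<Sum>v\<in>C. \<bar>c v\<bar> / s)"
    using assms(3) by (intro sum.cong[OF refl]) (simp add: abs_of_pos)
  also have "\<dots> = (\<Sum>v\<in>C. \<bar>c v\<bar>) / s" by (rule sum_divide_distrib[symmetric])
  also have "\<dots> = 1" using assms(2,3) by simp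
  finally show "(\<Sum>v\<in>C. \<bar>(if v \<in> C then c v / s else 0)\<bar>) = 1" .
qed

lemma normeq:
  fixes C :: "'a::real_normed_vector set"
  assumes fin: "finite C" and ind: "independent C"
  shows "\<exists>\<kappa>>0. \<forall>c. \<kappa> * (\<Sum>v\<in>C. \<bar>c v\<bar>) \<le> norm (\<Sum>v\<in>C. c v *\<^sub>R v)"
proof (cases "C = {}")
  case True then show ?thesis by (intro exI[of _ 1]) auto
next
  case False
  then obtain v0 where v0: "v0 \<in> C" by blast
  have ne: "Kset C \<noteq> {}"
  proof -
    have "(\<lambda>v. if v = v0 then 1 else 0) \<in> Kset C"
      using v0 fin by (intro Kset_memI) (auto simp: if_distrib sum.delta cong: if_cong)
    then show ?thesis by blast
  qed
  have cont: "continuous_on (Kset C) (\<lambda>c. norm (\<Sum>v\<in>C. c v *\<^sub>R v))"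
    by (intro continuous_on_norm continuous_on_sum continuous_on_scaleR continuous_on_const
        continuous_on_subset[OF continuous_on_product_coordinates] subset_UNIV)
  obtain cm where cm: "cm \<in> Kset C" "\<And>c. c \<in> Kset C \<Longrightarrow> norm (\<Sum>v\<in>C. cm v *\<^sub>R v) \<le> norm (\<Sum>v\<in>C. c v *\<^sub>R v)"
    using continuous_attains_inf[OF compact_Kset[OF fin] ne cont] by blast
  define \<kappa> where "\<kappa> = norm (\<Sum>v\<in>C. cm v *\<^sub>R v)"
  have "\<kappa> > 0"
  proof (rule ccontr)
    assume "\<not> \<kappa> > 0"
    then have "(\<Sum>v\<in>C. cm v *\<^sub>R v) = 0" unfolding \<kappa>_def by simp
    then have "\<forall>v\<in>C. cm v = 0" using ind fin by (auto simp: dependent_finite)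
    then show False using Kset_memD[OF cm(1)] by simp
  qed
  moreover have "\<kappa> * (\<Sum>v\<in>C. \<bar>c v\<bar>) \<le> norm (\<Sum>v\<in>C. c v *\<^sub>R v)" for c
  proof -
    define s where "s = (\<Sum>v\<in>C. \<bar>c v\<bar>)"
    show ?thesis
    proof (cases "s = 0")
      case True then show ?thesis unfolding s_def by simp
    next
      case False
      then have sp: "s > 0" unfolding s_def by (simp add: sum_nonneg order_le_neq_trans)
      define c' where "c' = (\<lambda>v. if v \<in> C then c v / s else 0)"
      have "c' \<in> Kset C" unfolding c'_def by (rule Kset_normalize[OF fin s_def[symmetric] sp])
      then have "\<kappa> \<le> norm (\<Sum>v\<in>C. c' v *\<^sub>R v)" unfolding \<kappa>_def by (rule cm(2))
      also have "(\<Sum>v\<in>C. c' v *\<^sub>R v) = (1 / s) *\<^sub>R (\<Sum>v\<in>C. c v *\<^sub>R v)"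
        unfolding c'_def scaleR_sum_right by (intro sum.cong) auto
      also have "norm \<dots> = norm (\<Sum>v\<in>C. c v *\<^sub>R v) / s" using sp by simp
      finally show ?thesis using sp unfolding s_def[symmetric] by (simp add: field_simps)
    qed
  qed
  ultimately show ?thesis by blast
qed


lemma almost_norming:
  fixes A :: "'b::real_normed_vector \<Rightarrow>\<^sub>L 'c::real_normed_vector"
  assumes Y: "(UNIV::'b set) \<noteq> {0}" and eta: "\<eta> > 0"
  shows "\<exists>y. norm y = 1 \<and> norm A - \<eta> < norm (blinfun_apply A y)"
proof -
  have unit: "norm ((1 / norm x) *\<^sub>R x) = 1" if "x \<noteq> 0" for x :: 'b
    using that by simp
  obtain x0 :: 'b where x0: "x0 \<noteq> 0" using Y by blast
  show ?thesis
  proof (cases "norm A - \<eta> < 0")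
    case True
    have "norm A - \<eta> < norm (blinfun_apply A ((1 / norm x0) *\<^sub>R x0))"
      using True by (smt (verit) norm_ge_zero)
    then show ?thesis using unit[OF x0] by blast
  next
    case False
    have bd: "norm (blinfun_apply A x) / norm x \<le> norm A" for x
    proof (cases "x = 0")
      case True then show ?thesis by simp
    next
      case False
      then show ?thesis using norm_blinfun[of A x] by (simp add: pos_divide_le_eq)
    qed
    have bdd: "bdd_above (range (\<lambda>x. norm (blinfun_apply A x) / norm x))"
      using bd by (intro bdd_aboveI2) auto
    have "norm A = (SUP x. norm (blinfun_apply A x) / norm x)"
      by (simp add: norm_blinfun.rep_eq onorm_def)
    then have "norm A - \<eta> < (SUP x. norm (blinfun_apply A x) / norm x)" using eta by simp
    then obtain x where x: "norm A - \<eta> < norm (blinfun_apply A x) / norm x"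
      using less_cSUP_iff[OF _ bdd] by blast
    have "x \<noteq> 0" using x False by auto
    have "blinfun_apply A ((1 / norm x) *\<^sub>R x) = (1 / norm x) *\<^sub>R blinfun_apply A x"
      by (simp add: blinfun.scaleR_right)
    then have "norm (blinfun_apply A ((1 / norm x) *\<^sub>R x)) = norm (blinfun_apply A x) / norm x"
      by simp
    then show ?thesis using x unit[OF \<open>x \<noteq> 0\<close>] by (intro exI[of _ "(1 / norm x) *\<^sub>R x"]) auto
  qed
qed

lemma blk_row_zero: "(\<And>j. w i j = 0) \<Longrightarrow> blk w i = 0"
  using blk_le[of i w 0] blk_nonneg[of w i] by simp

lemma block_elem:
  assumes z1: "\<And>i j. i \<noteq> n \<Longrightarrow> w i j = 0" and z2: "\<And>j. n < j \<Longrightarrow> w n j = 0"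
  shows "Rep_lsum (Abs_lsum w) = w" "norm (Abs_lsum w) = blk w n"
proof -
  have bz: "blk w i = 0" if "i \<noteq> n" for i using z1[OF that] by (intro blk_row_zero) auto
  have sm: "summable (blk w)" by (rule summable_finite[of "{n}"]) (use bz in auto)
  have "\<forall>i j. i < j \<longrightarrow> w i j = 0"
  proof (intro allI impI)
    fix i j :: nat assume "i < j" then show "w i j = 0" using z1 z2 by (cases "i = n") auto
  qed
  then show r: "Rep_lsum (Abs_lsum w) = w" using sm by (intro Abs_lsum_inverse) auto
  have "suminf (blk w) = (\<Sum>i\<in>{n}. blk w i)" by (rule suminf_finite) (use bz in auto)
  then show "norm (Abs_lsum w) = blk w n" unfolding norm_lsum_eq r by simp
qed

lemma norm_add_block:
  assumes zq: "\<And>i j. i \<noteq> n \<Longrightarrow> Rep_lsum q i j = 0"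
  shows "norm p - 2 * blk (Rep_lsum p) n + blk (Rep_lsum q) n \<le> norm (p + q)"
proof -
  define P where "P = blk (Rep_lsum p)"
  define Q where "Q = blk (Rep_lsum q)"
  define R where "R = blk (Rep_lsum (p + q))"
  have Rrep: "Rep_lsum (p + q) = (\<lambda>i j. Rep_lsum p i j + Rep_lsum q i j)" by (simp add: plus_lsum.rep_eq)
  have Q0: "Q i = 0" if "i \<noteq> n" for i unfolding Q_def using zq[OF that] by (intro blk_row_zero) auto
  have PR: "P i \<le> R i + Q i" for i unfolding P_def
  proof (rule blk_le)
    fix j assume "j \<le> i"
    then have "\<bar>Rep_lsum (p + q) i j\<bar> \<le> R i" "\<bar>Rep_lsum q i j\<bar> \<le> Q i"
      unfolding R_def Q_def by (auto intro: blk_ge)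
    then show "\<bar>Rep_lsum p i j\<bar> \<le> R i + Q i" unfolding Rrep by linarith
  qed
  have QR: "Q i \<le> R i + P i" for i unfolding Q_def
  proof (rule blk_le)
    fix j assume "j \<le> i"
    then have "\<bar>Rep_lsum (p + q) i j\<bar> \<le> R i" "\<bar>Rep_lsum p i j\<bar> \<le> P i"
      unfolding R_def P_def by (auto intro: blk_ge)
    then show "\<bar>Rep_lsum q i j\<bar> \<le> R i + P i" unfolding Rrep by linarith
  qed
  define d where "d i = (if i = n then Q n - 2 * P n else 0)" for i
  have sd: "summable d" by (rule summable_finite[of "{n}"]) (auto simp: d_def)
  have sdv: "suminf d = Q n - 2 * P n" by (subst suminf_finite[of "{n}"]) (auto simp: d_def)
  have sP: "summable P" unfolding P_def by (rule summable_blk_lsum)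
  have sR: "summable R" unfolding R_def by (rule summable_blk_lsum)
  have "suminf P + suminf d = (\<Sum>i. P i + d i)" by (rule suminf_add[OF sP sd])
  also have "\<dots> \<le> suminf R"
  proof (rule suminf_le)
    show "summable (\<lambda>i. P i + d i)" by (rule summable_add[OF sP sd])
    show "summable R" by (rule sR)
    fix i show "P i + d i \<le> R i"
      using PR[of i] QR[of i] Q0[of i] by (cases "i = n") (auto simp: d_def)
  qed
  finally show ?thesis using sdv unfolding norm_lsum_eq P_def Q_def R_def by simp
qed

lemma blk_sum_le: "blk (Rep_lsum (sum f A)) n \<le> (\<Sum>a\<in>A. blk (Rep_lsum (f a)) n)"
proof (induction A rule: infinite_finite_induct)
  case (infinite A) then show ?case by (simp add: zero_lsum.rep_eq blk_zero)
next
  case empty then show ?case by (simp add: zero_lsum.rep_eq blk_zero)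
next
  case (insert a F)
  have "blk (Rep_lsum (sum f (insert a F))) n = blk (\<lambda>i j. Rep_lsum (f a) i j + Rep_lsum (sum f F) i j) n"
    using insert by (simp add: plus_lsum.rep_eq)
  also have "\<dots> \<le> blk (Rep_lsum (f a)) n + blk (Rep_lsum (sum f F)) n" by (rule blk_add)
  finally show ?case using insert by simp
qed

lemma blk_scaleR_lsum: "blk (Rep_lsum (c *\<^sub>R x)) n = \<bar>c\<bar> * blk (Rep_lsum x) n"
  by (simp add: scaleR_lsum.rep_eq blk_scale)


lemma oct_main:
  fixes C :: "('b::real_normed_vector \<Rightarrow>\<^sub>L lsum) set"
  assumes Y: "(UNIV::'b set) \<noteq> {0}" and fin: "finite C" and ind: "independent C" and eps: "\<epsilon> > 0"
  shows "\<exists>S::'b \<Rightarrow>\<^sub>L lsum. norm S = 1 \<and>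
           (\<forall>T\<in>span C. \<forall>t::real. (1 - \<epsilon>) * (norm T + \<bar>t\<bar>) \<le> norm (T + t *\<^sub>R S))"
proof -
  obtain \<kappa> where ka: "\<kappa> > 0" "\<And>c. \<kappa> * (\<Sum>v\<in>C. \<bar>c v\<bar>) \<le> norm (\<Sum>v\<in>C. c v *\<^sub>R v)"
    using normeq[OF fin ind] by blast
  define \<eta> where "\<eta> = \<epsilon> * \<kappa> / 3"
  have eta: "\<eta> > 0" unfolding \<eta>_def using eps ka by simp
  define F where "F c = (\<Sum>v\<in>C. c v *\<^sub>R v)" for c :: "('b \<Rightarrow>\<^sub>L lsum) \<Rightarrow> real"
  have Fapp: "blinfun_apply (F c) y = (\<Sum>v\<in>C. c v *\<^sub>R blinfun_apply v y)" for c y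
    unfolding F_def by (simp add: blinfun.sum_left blinfun.scaleR_left)
  define yf where "yf c = (SOME y. norm y = 1 \<and> norm (F c) - \<eta> < norm (blinfun_apply (F c) y))" for c
  have yf: "norm (yf c) = 1 \<and> norm (F c) - \<eta> < norm (blinfun_apply (F c) (yf c))" for c
    unfolding yf_def by (rule someI_ex) (rule almost_norming[OF Y eta])
  define Op where "Op c0 = {c. norm (F c) - \<eta> < norm (\<Sum>v\<in>C. c v *\<^sub>R blinfun_apply v (yf c0))}" for c0
  have openO: "open (Op c0)" for c0
    unfolding Op_def F_def
    by (intro open_Collect_less continuous_on_diff continuous_on_norm continuous_on_sum continuous_on_scaleR
        continuous_on_const continuous_on_product_coordinates)
  have cov: "Kset C \<subseteq> (\<Union>c\<in>Kset C. Op c)"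
  proof
    fix c assume "c \<in> Kset C"
    moreover have "c \<in> Op c" using yf[of c] unfolding Op_def Fapp by simp
    ultimately show "c \<in> (\<Union>c\<in>Kset C. Op c)" by blast
  qed
  obtain Cs where Cs: "Cs \<subseteq> Kset C" "finite Cs" "Kset C \<subseteq> (\<Union>c\<in>Cs. Op c)"
    using compactE_image[OF compact_Kset[OF fin] openO cov] by blast
  obtain y00 :: 'b where y00: "norm y00 = 1" using yf by blast
  obtain ys where ys: "set ys = insert y00 (yf ` Cs)" using finite_list[of "insert y00 (yf ` Cs)"] Cs(2) by auto
  define m where "m = length ys"
  have m0: "m > 0" unfolding m_def using ys by (cases ys) auto
  have ysn: "norm (ys ! k) = 1" if "k < m" for k
  proof -
    have "ys ! k \<in> set ys" using that unfolding m_def by simp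
    then show ?thesis using ys y00 yf by auto
  qed
  define \<phi> where "\<phi> k = (SOME f. (\<forall>x y. f (x + y) = f x + f y) \<and> (\<forall>c x. f (c *\<^sub>R x) = c * f x) \<and>
             (\<forall>x. \<bar>f x\<bar> \<le> norm x) \<and> f (ys ! k) = norm (ys ! k))" for k
  have \<phi>: "(\<forall>x y. \<phi> k (x + y) = \<phi> k x + \<phi> k y) \<and> (\<forall>c x. \<phi> k (c *\<^sub>R x) = c * \<phi> k x) \<and>
             (\<forall>x. \<bar>\<phi> k x\<bar> \<le> norm x) \<and> \<phi> k (ys ! k) = 1" if "k < m" for k
  proof -
    have "ys ! k \<noteq> 0" using ysn[OF that] by auto
    then have "\<exists>f. (\<forall>x y. f (x + y) = f x + f y) \<and> (\<forall>c x. f (c *\<^sub>R x) = c * f x) \<and>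
             (\<forall>x. \<bar>f x\<bar> \<le> norm x) \<and> f (ys ! k) = norm (ys ! k)" by (rule hahn_banach_norm)
    from someI_ex[OF this] have "(\<forall>x y. \<phi> k (x + y) = \<phi> k x + \<phi> k y) \<and> (\<forall>c x. \<phi> k (c *\<^sub>R x) = c * \<phi> k x) \<and>
             (\<forall>x. \<bar>\<phi> k x\<bar> \<le> norm x) \<and> \<phi> k (ys ! k) = norm (ys ! k)" unfolding \<phi>_def .
    then show ?thesis using ysn[OF that] by simp
  qed
  have "\<forall>\<^sub>F n in sequentially. \<forall>p\<in>C \<times> {..<m}. blk (Rep_lsum (blinfun_apply (fst p) (ys ! snd p))) n < \<eta>"
  proof (rule eventually_ball_finite)
    show "finite (C \<times> {..<m})" using fin by simp
    show "\<forall>p\<in>C \<times> {..<m}. \<forall>\<^sub>F n in sequentially. blk (Rep_lsum (blinfun_apply (fst p) (ys ! snd p))) n < \<eta>"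
    proof
      fix p
      have "(\<lambda>n. blk (Rep_lsum (blinfun_apply (fst p) (ys ! snd p))) n) \<longlonglongrightarrow> 0"
        by (rule summable_LIMSEQ_zero) (rule summable_blk_lsum)
      then show "\<forall>\<^sub>F n in sequentially. blk (Rep_lsum (blinfun_apply (fst p) (ys ! snd p))) n < \<eta>"
        using eta by (rule order_tendstoD(2))
    qed
  qed
  moreover have "\<forall>\<^sub>F n in sequentially. n \<ge> m" by (simp add: eventually_ge_at_top)
  ultimately have "\<forall>\<^sub>F n in sequentially. (\<forall>p\<in>C \<times> {..<m}. blk (Rep_lsum (blinfun_apply (fst p) (ys ! snd p))) n < \<eta>) \<and> n \<ge> m"
    by (rule eventually_conj)
  then obtain n where n: "\<And>v k. v \<in> C \<Longrightarrow> k < m \<Longrightarrow> blk (Rep_lsum (blinfun_apply v (ys ! k))) n < \<eta>" "n \<ge> m"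
    unfolding eventually_sequentially by force
  define w where "w y = (\<lambda>i j. if i = n \<and> j < m then \<phi> j y else 0)" for y
  define Sf where "Sf y = Abs_lsum (w y)" for y
  have wz1: "w y i j = 0" if "i \<noteq> n" for y i j using that unfolding w_def by simp
  have wz2: "w y n j = 0" if "n < j" for y j unfolding w_def using n(2) that by auto
  have RepS: "Rep_lsum (Sf y) = w y" for y unfolding Sf_def by (rule block_elem(1)[where n=n and w="w y", OF wz1 wz2])
  have normS: "norm (Sf y) = blk (w y) n" for y unfolding Sf_def by (rule block_elem(2)[where n=n and w="w y", OF wz1 wz2])
  have \<phi>add: "\<phi> j (x + y) = \<phi> j x + \<phi> j y" if "j < m" for j x y using \<phi>[OF that] by blast
  have \<phi>scl: "\<phi> j (c *\<^sub>R x) = c * \<phi> j x" if "j < m" for j c x using \<phi>[OF that] by blast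
  have \<phi>bd: "\<bar>\<phi> j x\<bar> \<le> norm x" if "j < m" for j x using \<phi>[OF that] by blast
  have Sadd: "Sf (x + y) = Sf x + Sf y" for x y
    by (rule Rep_lsum_inject[THEN iffD1]) (auto simp: RepS plus_lsum.rep_eq w_def \<phi>add intro!: ext)
  have Sscl: "Sf (c *\<^sub>R x) = c *\<^sub>R Sf x" for c x
    by (rule Rep_lsum_inject[THEN iffD1]) (auto simp: RepS scaleR_lsum.rep_eq w_def \<phi>scl intro!: ext)
  have Sbd: "norm (Sf y) \<le> norm y" for y
    unfolding normS by (rule blk_le) (auto simp: w_def \<phi>bd)
  have blS: "bounded_linear Sf"
    by (rule bounded_linear_intro[where K=1]) (auto simp: Sadd Sscl Sbd)
  define S where "S = Blinfun Sf"
  have Sapp: "blinfun_apply S = Sf" unfolding S_def by (rule bounded_linear_Blinfun_apply[OF blS])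
  have Sk: "blk (w (ys ! k)) n \<ge> 1" if "k < m" for k
  proof -
    have "\<bar>w (ys ! k) n k\<bar> \<le> blk (w (ys ! k)) n" using that n(2) by (intro blk_ge) auto
    then show ?thesis using \<phi>[OF that] that by (simp add: w_def)
  qed
  have nS: "norm S = 1"
  proof -
    have "norm S = onorm Sf" by (simp add: norm_blinfun.rep_eq Sapp)
    moreover have "onorm Sf \<le> 1" by (rule onorm_bound) (auto simp: Sbd)
    moreover have "norm (Sf (ys ! 0)) / norm (ys ! 0) \<le> onorm Sf" by (rule le_onorm[OF blS])
    moreover have "norm (Sf (ys ! 0)) / norm (ys ! 0) \<ge> 1" using Sk[OF m0] ysn[OF m0] normS by simp
    ultimately show ?thesis by linarith
  qed
  have main: "(1 - \<epsilon>) * (norm T + \<bar>t\<bar>) \<le> norm (T + t *\<^sub>R S)" if T: "T \<in> span C" for T t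
  proof -
    obtain u where u: "T = F u" using T span_finite[OF fin] unfolding F_def by auto
    define s where "s = (\<Sum>v\<in>C. \<bar>u v\<bar>)"
    have s0: "s \<ge> 0" unfolding s_def by (simp add: sum_nonneg)
    have ks: "\<kappa> * s \<le> norm T" unfolding s_def u F_def by (rule ka(2))
    show ?thesis
    proof (cases "s = 0")
      case True
      then have "\<forall>v\<in>C. u v = 0" unfolding s_def using fin by (simp add: sum_nonneg_eq_0_iff)
      then have "T = 0" unfolding u F_def by simp
      moreover have "(1 - \<epsilon>) * \<bar>t\<bar> \<le> \<bar>t\<bar>" using eps by (simp add: algebra_simps)
      ultimately show ?thesis using nS by simp
    next
      case False
      then have sp: "s > 0" using s0 by simp
      define c' where "c' = (\<lambda>v. if v \<in> C then u v / s else 0)"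
      have c'K: "c' \<in> Kset C" unfolding c'_def by (rule Kset_normalize[OF fin s_def[symmetric] sp])
      then obtain c0 where c0: "c0 \<in> Cs" "c' \<in> Op c0" using Cs(3) by blast
      define y where "y = yf c0"
      have "y \<in> set ys" using ys c0(1) unfolding y_def by auto
      then obtain k where k: "k < m" "ys ! k = y" unfolding m_def by (auto simp: in_set_conv_nth)
      have Fc': "F c' = (1 / s) *\<^sub>R T"
        unfolding u F_def c'_def scaleR_sum_right by (intro sum.cong) auto
      have "norm (F c') - \<eta> < norm (blinfun_apply (F c') y)" using c0(2) unfolding Op_def Fapp y_def by simp
      then have "norm T / s - \<eta> < norm (blinfun_apply T y) / s"
        unfolding Fc' using sp by (simp add: blinfun.scaleR_left)
      then have "(norm T / s - \<eta>) * s < (norm (blinfun_apply T y) / s) * s"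
        by (rule mult_strict_right_mono[OF _ sp])
      then have Ty: "norm T - s * \<eta> < norm (blinfun_apply T y)" using sp by (simp add: algebra_simps)
      have "blk (Rep_lsum (blinfun_apply T y)) n \<le> (\<Sum>v\<in>C. blk (Rep_lsum (u v *\<^sub>R blinfun_apply v y)) n)"
        unfolding u Fapp by (rule blk_sum_le)
      also have "\<dots> \<le> (\<Sum>v\<in>C. \<bar>u v\<bar> * \<eta>)"
      proof (rule sum_mono)
        fix v assume "v \<in> C"
        then have "blk (Rep_lsum (blinfun_apply v y)) n \<le> \<eta>" using n(1)[of v k] k by simp
        then show "blk (Rep_lsum (u v *\<^sub>R blinfun_apply v y)) n \<le> \<bar>u v\<bar> * \<eta>"
          unfolding blk_scaleR_lsum by (simp add: mult_left_mono)
      qed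
      also have "\<dots> = s * \<eta>" unfolding s_def by (simp add: sum_distrib_right)
      finally have bT: "blk (Rep_lsum (blinfun_apply T y)) n \<le> s * \<eta>" .
      have app: "blinfun_apply (T + t *\<^sub>R S) y = blinfun_apply T y + t *\<^sub>R Sf y"
        by (simp add: blinfun.add_left blinfun.scaleR_left Sapp)
      have zq: "Rep_lsum (t *\<^sub>R Sf y) i j = 0" if "i \<noteq> n" for i j
        using that by (simp add: scaleR_lsum.rep_eq RepS w_def)
      have "blk (Rep_lsum (t *\<^sub>R Sf y)) n \<ge> \<bar>t\<bar>"
        unfolding blk_scaleR_lsum RepS using Sk[OF k(1)] k(2) by (simp add: mult_le_cancel_left1)
      then have "norm (blinfun_apply T y) - 2 * (s * \<eta>) + \<bar>t\<bar> \<le> norm (blinfun_apply (T + t *\<^sub>R S) y)"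
        using norm_add_block[of n "t *\<^sub>R Sf y" "blinfun_apply T y", OF zq] bT unfolding app by linarith
      also have "\<dots> \<le> norm (T + t *\<^sub>R S)"
        using norm_blinfun[of "T + t *\<^sub>R S" y] yf[of c0] unfolding y_def by simp
      finally have "norm T - 3 * (s * \<eta>) + \<bar>t\<bar> \<le> norm (T + t *\<^sub>R S)" using Ty by linarith
      moreover have "3 * (s * \<eta>) \<le> \<epsilon> * norm T"
      proof -
        have "3 * (s * \<eta>) = \<epsilon> * (\<kappa> * s)" unfolding \<eta>_def by (simp add: algebra_simps)
        also have "\<dots> \<le> \<epsilon> * norm T" using ks eps by (intro mult_left_mono) auto
        finally show ?thesis .
      qed
      moreover have "(1 - \<epsilon>) * (norm T + \<bar>t\<bar>) \<le> norm T - \<epsilon> * norm T + \<bar>t\<bar>"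
        using eps by (simp add: algebra_simps)
      ultimately show ?thesis by linarith
    qed
  qed
  show ?thesis using nS main by blast
qed

lemma octahedral_L:
  assumes Y: "(UNIV :: 'b::real_normed_vector set) \<noteq> {0}"
  shows "octahedral (UNIV :: ('b \<Rightarrow>\<^sub>L lsum) set)"
  unfolding octahedral_def
proof (intro allI impI)
  fix E :: "('b \<Rightarrow>\<^sub>L lsum) set" and \<epsilon> :: real
  assume a: "subspace E \<and> E \<subseteq> UNIV \<and> (\<exists>B. finite B \<and> E = span B) \<and> 0 < \<epsilon>"
  then have eps: "\<epsilon> > 0" by simp
  from a obtain B where B: "finite B" "E = span B" by blast
  obtain C where C: "C \<subseteq> E" "independent C" "E \<subseteq> span C"
    by (rule basis_exists[of E])
  have "C \<subseteq> span B" using C(1) B(2) by simp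
  then have fC: "finite C" using independent_span_bound[OF B(1) C(2)] by simp
  obtain S :: "'b \<Rightarrow>\<^sub>L lsum" where S: "norm S = 1"
    "\<And>T t. T \<in> span C \<Longrightarrow> (1 - \<epsilon>) * (norm T + \<bar>t\<bar>) \<le> norm (T + t *\<^sub>R S)"
    using oct_main[OF Y fC C(2) eps] by auto
  have "\<forall>x\<in>E. \<forall>t. (1 - \<epsilon>) * (norm x + \<bar>t\<bar>) \<le> norm (x + t *\<^sub>R S)"
  proof (intro ballI allI)
    fix x t assume "x \<in> E"
    then have "x \<in> span C" using C(3) by (rule subsetD[rotated])
    then show "(1 - \<epsilon>) * (norm x + \<bar>t\<bar>) \<le> norm (x + t *\<^sub>R S)" by (rule S(2))
  qed
  then show "\<exists>y\<in>UNIV. norm y = 1 \<and> (\<forall>x\<in>E. \<forall>t. (1 - \<epsilon>) * (norm x + \<bar>t\<bar>) \<le> norm (x + t *\<^sub>R y))"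
    using S(1) by (intro bexI[of _ S]) auto
qed

theorem mainTheorem7:
  shows "((UNIV :: 'b::banach set) \<noteq> {0} \<longrightarrow> octahedral (UNIV :: ('b \<Rightarrow>\<^sub>L lsum) set))
         \<and> \<not> contains_c0 TYPE(lsum) \<and> \<not> c0_octahedral TYPE(lsum)"
proof (intro conjI impI)
  assume "(UNIV :: 'b::banach set) \<noteq> {0}"
  then show "octahedral (UNIV :: ('b \<Rightarrow>\<^sub>L lsum) set)" by (rule octahedral_L)
next
  show "\<not> contains_c0 TYPE(lsum)" by (rule no_c0)
next
  show "\<not> c0_octahedral TYPE(lsum)" by (rule no_c0_oct)
qed


end
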